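(* For $a\in\mathbb{R}$, let the polynomials $H_m(z,a)$ in $z$ be defined by $\sum_{m\ge0}H_m(z,a)t^m=\frac{1}{1+t+at^2+zt^3}$, and let $I_a=\left(-\infty,\frac{-2+9a-2\sqrt{(1-3a)^3}}{27}\right]$. Let $S$ be a dense subset of $[-1,1/3]$ and fix $m\in\mathbb{N}$. If $\mathcal{Z}(H_m(z,a))\subseteq I_a$ for all $a\in S$, then $\mathcal{Z}(H_m(z,a^* ))\subseteq I_{a^*}$ for all $a^*\in[-1,1/3]$.
   Context: $\mathcal{Z}(H_m(z,a))$ denotes the set of zeros in $z$ of the polynomial $H_m(z,a)$. *)

theory Defs
  imports "HOL-Analysis.Analysis" "HOL-Computational_Algebra.Formal_Power_Series"
begin

text \<open>H_m(z,a) evaluated at a complex point z: the m-th coefficient of the formal power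
  series 1/(1 + t + a t^2 + z t^3) (constant term 1, so the inverse is the genuine one).\<close>
definition H :: "nat \<Rightarrow> complex \<Rightarrow> real \<Rightarrow> complex" where
  "H m z a = fps_nth (inverse (1 + fps_X + fps_const (complex_of_real a) * fps_X ^ 2
                               + fps_const z * fps_X ^ 3)) m"

definition Zset :: "nat \<Rightarrow> real \<Rightarrow> complex set" where
  "Zset m a = {z. H m z a = 0}"

definition Iint :: "real \<Rightarrow> real set" where
  "Iint a = {.. (-2 + 9*a - 2 * sqrt ((1 - 3*a) ^ 3)) / 27}"

end

theory Submission
  imports Defs "HOL-Computational_Algebra.Fundamental_Theorem_Algebra"
begin

lemma H_rec:
  fixes z :: complex and a :: real
  shows "H 0 z a = 1" "H (Suc 0) z a = -1" "H (Suc (Suc 0)) z a = 1 - of_real a"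
    "H (Suc (Suc (Suc n))) z a = - H (Suc (Suc n)) z a - of_real a * H (Suc n) z a - z * H n z a"
proof -
  define D where "D = (1 + fps_X + fps_const (complex_of_real a) * fps_X ^ 2 + fps_const z * fps_X ^ 3 :: complex fps)"
  define F where "F = inverse D"
  have D0: "fps_nth D 0 = 1" by (simp add: D_def)
  have "D * F = 1" unfolding F_def by (rule inverse_mult_eq_1') (simp add: D0)
  moreover have "D * F = F + fps_X ^ 1 * F + fps_const (complex_of_real a) * (fps_X ^ 2 * F) + fps_const z * (fps_X ^ 3 * F)"
    by (simp add: D_def algebra_simps)
  ultimately have eq: "\<And>k. fps_nth F k + fps_nth (fps_X ^ 1 * F) k + complex_of_real a * fps_nth (fps_X ^ 2 * F) k + z * fps_nth (fps_X ^ 3 * F) k = (if k = 0 then 1 else 0)"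
    by (metis fps_add_nth fps_mult_left_const_nth fps_one_nth)
  have HF: "\<And>m. H m z a = fps_nth F m" by (simp add: H_def F_def D_def)
  have e0: "fps_nth F 0 = 1" using eq[of 0] by (simp add: fps_X_power_mult_nth)
  have e1: "fps_nth F 1 = -1" using eq[of 1] e0 by (simp add: fps_X_power_mult_nth) (metis add.commute eq_neg_iff_add_eq_0)
  have "fps_nth F 2 + fps_nth F 1 + complex_of_real a * fps_nth F 0 = 0" using eq[of 2] by (simp add: fps_X_power_mult_nth)
  then have e2: "fps_nth F 2 = 1 - of_real a" using e0 e1 by (simp add: algebra_simps)
  show "H 0 z a = 1" "H (Suc 0) z a = -1" "H (Suc (Suc 0)) z a = 1 - of_real a"
    using e0 e1 e2 by (simp_all add: HF numeral_2_eq_2)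
  have "fps_nth F (Suc (Suc (Suc n))) + fps_nth F (Suc (Suc n)) + complex_of_real a * fps_nth F (Suc n) + z * fps_nth F n = 0"
    using eq[of "Suc (Suc (Suc n))"] by (simp add: fps_X_power_mult_nth)
  then show "H (Suc (Suc (Suc n))) z a = - H (Suc (Suc n)) z a - of_real a * H (Suc n) z a - z * H n z a"
    unfolding HF by (simp add: algebra_simps) (metis add.commute add.left_commute eq_neg_iff_add_eq_0)
qed

fun Hp :: "nat \<Rightarrow> real \<Rightarrow> complex poly" where
  "Hp 0 a = 1"
| "Hp (Suc 0) a = -1"
| "Hp (Suc (Suc 0)) a = [:1 - complex_of_real a:]"
| "Hp (Suc (Suc (Suc n))) a = - Hp (Suc (Suc n)) a - smult (complex_of_real a) (Hp (Suc n) a) - pCons 0 (Hp n a)"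

lemma poly_Hp: "poly (Hp m a) z = H m z a"
  by (induction m a rule: Hp.induct) (simp_all add: H_rec algebra_simps)

lemma H_cont: "continuous_on UNIV (\<lambda>b. H m z b)"
proof (induction m rule: less_induct)
  case (less m)
  show ?case
  proof (cases m)
    case 0 then show ?thesis by (simp add: H_rec)
  next
    case (Suc m1)
    show ?thesis
    proof (cases m1)
      case 0 then show ?thesis using Suc by (simp add: H_rec)
    next
      case (Suc m2)
      show ?thesis
      proof (cases m2)
        case 0 then show ?thesis using Suc \<open>m = Suc m1\<close> by (simp add: H_rec continuous_intros)
      next
        case (Suc n)
        have "continuous_on UNIV (\<lambda>b. H (Suc (Suc n)) z b)" "continuous_on UNIV (\<lambda>b. H (Suc n) z b)"
             "continuous_on UNIV (\<lambda>b. H n z b)"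
          using less \<open>m = Suc m1\<close> \<open>m1 = Suc m2\<close> Suc by auto
        then show ?thesis using \<open>m = Suc m1\<close> \<open>m1 = Suc m2\<close> Suc
          by (simp add: H_rec continuous_intros)
      qed
    qed
  qed
qed

definition c0 :: "nat \<Rightarrow> complex" where "c0 q = (-1)^q"
definition c1 :: "nat \<Rightarrow> complex" where "c1 q = (-1)^(q+1) * of_nat (q+1)"
definition c2 :: "nat \<Rightarrow> real \<Rightarrow> complex" where
  "c2 q a = (-1)^q * of_nat (q+1) * (of_nat (q+2) / 2 - of_real a)"

lemma Hp_coeffs:
  "coeff (Hp (3*q) a) q = c0 q \<and> (\<forall>k>q. coeff (Hp (3*q) a) k = 0) \<and>
   coeff (Hp (3*q+1) a) q = c1 q \<and> (\<forall>k>q. coeff (Hp (3*q+1) a) k = 0) \<and>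
   coeff (Hp (3*q+2) a) q = c2 q a \<and> (\<forall>k>q. coeff (Hp (3*q+2) a) k = 0)"
proof (induction q)
  case 0
  then show ?case by (simp add: c0_def c1_def c2_def numeral_2_eq_2 coeff_pCons split: nat.splits)
next
  case (Suc q)
  have q0: "3 * Suc q = Suc (Suc (Suc (3*q)))" by simp
  have q1: "3 * Suc q + 1 = Suc (Suc (Suc (Suc (3*q))))" by simp
  have q2: "3 * Suc q + 2 = Suc (Suc (Suc (Suc (Suc (3*q)))))" by simp
  have e0: "Hp (3 * Suc q) a = - Hp (3*q+2) a - smult (complex_of_real a) (Hp (3*q+1) a) - pCons 0 (Hp (3*q) a)"
    unfolding q0 by (simp only: Hp.simps; simp)
  have e1: "Hp (3 * Suc q + 1) a = - Hp (3 * Suc q) a - smult (complex_of_real a) (Hp (3*q+2) a) - pCons 0 (Hp (3*q+1) a)"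
    unfolding q1 q0 by (simp only: Hp.simps; simp)
  have e2: "Hp (3 * Suc q + 2) a = - Hp (3 * Suc q + 1) a - smult (complex_of_real a) (Hp (3 * Suc q) a) - pCons 0 (Hp (3*q+2) a)"
    unfolding q2 q1 q0 by (simp only: Hp.simps; simp)
  have z0: "\<forall>k>Suc q. coeff (Hp (3 * Suc q) a) k = 0"
  proof (intro allI impI)
    fix k assume k: "k > Suc q"
    then obtain k' where k': "k = Suc k'" "k' > q" by (cases k) auto
    have "coeff (Hp (3 * Suc q) a) k = - coeff (Hp (3*q+2) a) k - complex_of_real a * coeff (Hp (3*q+1) a) k - coeff (Hp (3*q) a) k'"
      by (simp only: e0 coeff_diff coeff_minus coeff_smult k'(1) coeff_pCons_Suc)
    then show "coeff (Hp (3 * Suc q) a) k = 0" using Suc k k' by simp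
  qed
  have z1: "\<forall>k>Suc q. coeff (Hp (3 * Suc q + 1) a) k = 0"
  proof (intro allI impI)
    fix k assume k: "k > Suc q"
    then obtain k' where k': "k = Suc k'" "k' > q" by (cases k) auto
    have "coeff (Hp (3 * Suc q + 1) a) k = - coeff (Hp (3 * Suc q) a) k - complex_of_real a * coeff (Hp (3*q+2) a) k - coeff (Hp (3*q+1) a) k'"
      by (simp only: e1 coeff_diff coeff_minus coeff_smult k'(1) coeff_pCons_Suc)
    then show "coeff (Hp (3 * Suc q + 1) a) k = 0" using z0 Suc k k' by simp
  qed
  have z2: "\<forall>k>Suc q. coeff (Hp (3 * Suc q + 2) a) k = 0"
  proof (intro allI impI)
    fix k assume k: "k > Suc q"
    then obtain k' where k': "k = Suc k'" "k' > q" by (cases k) auto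
    have "coeff (Hp (3 * Suc q + 2) a) k = - coeff (Hp (3 * Suc q + 1) a) k - complex_of_real a * coeff (Hp (3 * Suc q) a) k - coeff (Hp (3*q+2) a) k'"
      by (simp only: e2 coeff_diff coeff_minus coeff_smult k'(1) coeff_pCons_Suc)
    then show "coeff (Hp (3 * Suc q + 2) a) k = 0" using z0 z1 Suc k k' by simp
  qed
  have v0: "coeff (Hp (3 * Suc q) a) (Suc q) = - coeff (Hp (3*q+2) a) (Suc q) - complex_of_real a * coeff (Hp (3*q+1) a) (Suc q) - coeff (Hp (3*q) a) q"
    by (simp only: e0 coeff_diff coeff_minus coeff_smult coeff_pCons_Suc)
  then have v0: "coeff (Hp (3 * Suc q) a) (Suc q) = c0 (Suc q)"
    using Suc by (simp add: c0_def)
  have v1: "coeff (Hp (3 * Suc q + 1) a) (Suc q) = - coeff (Hp (3 * Suc q) a) (Suc q) - complex_of_real a * coeff (Hp (3*q+2) a) (Suc q) - coeff (Hp (3*q+1) a) q"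
    by (simp only: e1 coeff_diff coeff_minus coeff_smult coeff_pCons_Suc)
  also have "\<dots> = - c0 (Suc q) - complex_of_real a * 0 - c1 q"
    using Suc v0 by (metis lessI)
  also have "\<dots> = c1 (Suc q)" by (simp add: c0_def c1_def algebra_simps)
  finally have v1: "coeff (Hp (3 * Suc q + 1) a) (Suc q) = c1 (Suc q)" .
  have v2: "coeff (Hp (3 * Suc q + 2) a) (Suc q) = - coeff (Hp (3 * Suc q + 1) a) (Suc q) - complex_of_real a * coeff (Hp (3 * Suc q) a) (Suc q) - coeff (Hp (3*q+2) a) q"
    by (simp only: e2 coeff_diff coeff_minus coeff_smult coeff_pCons_Suc)
  also have "\<dots> = - c1 (Suc q) - complex_of_real a * c0 (Suc q) - c2 q a"
    using Suc v0 v1 by metis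
  also have "\<dots> = c2 (Suc q) a" by (simp add: c0_def c1_def c2_def field_simps)
  finally have v2: "coeff (Hp (3 * Suc q + 2) a) (Suc q) = c2 (Suc q) a" .
  show ?case using z0 z1 z2 v0 v1 v2 by blast
qed


lemma c2_real: "c2 q a = complex_of_real ((-1)^q * real (q+1) * (real (q+2) / 2 - a))"
  by (simp add: c2_def)

lemma Hp_lead: "\<exists>d L. continuous_on UNIV L \<and> (\<forall>a. a \<le> 1/3 \<longrightarrow> L a \<noteq> 0) \<and>
   (\<forall>a. coeff (Hp m a) d = L a \<and> (\<forall>k>d. coeff (Hp m a) k = 0))"
proof -
  define q where "q = m div 3"
  have "m mod 3 = 0 \<or> m mod 3 = 1 \<or> m mod 3 = 2" by auto
  moreover have m: "m = 3 * q + m mod 3" by (simp add: q_def)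
  ultimately consider "m = 3*q" | "m = 3*q+1" | "m = 3*q+2" by auto
  then show ?thesis
  proof cases
    case 1
    show ?thesis
      by (rule exI[of _ q], rule exI[of _ "\<lambda>_. c0 q"]) (use Hp_coeffs[of q] 1 in \<open>auto simp: c0_def\<close>)
  next
    case 2
    have "(1::complex) + of_nat q \<noteq> 0" by (metis of_nat_Suc of_nat_eq_0_iff nat.distinct(1) add.commute)
    show ?thesis
      by (rule exI[of _ q], rule exI[of _ "\<lambda>_. c1 q"]) (use Hp_coeffs[of q] 2 \<open>1 + of_nat q \<noteq> 0\<close> in \<open>auto simp: c1_def add.commute\<close>)
  next
    case 3
    have nz: "c2 q a \<noteq> 0" if "a \<le> 1/3" for a
    proof -
      have "real (q+2) / 2 - a > 0" using that by simp
      then have "(-1::real)^q * real (q+1) * (real (q+2) / 2 - a) \<noteq> 0" by simp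
      then show ?thesis unfolding c2_real of_real_eq_0_iff .
    qed
    show ?thesis
      by (rule exI[of _ q], rule exI[of _ "c2 q"]) (use Hp_coeffs[of q] 3 nz in \<open>auto simp: c2_def intro!: continuous_intros\<close>)
  qed
qed

lemma prod_bound:
  fixes M :: "complex multiset"
  assumes "\<forall>x\<in>#M. e \<le> cmod (z - x)" "0 \<le> e"
  shows "e ^ size M \<le> cmod (poly (\<Prod>x\<in>#M. [:-x,1:]) z)"
  using assms
proof (induction M)
  case empty then show ?case by simp
next
  case (add x M)
  have "e ^ size M \<le> cmod (poly (\<Prod>x\<in>#M. [:-x,1:]) z)" using add by simp
  moreover have "e \<le> cmod (z - x)" using add by simp
  ultimately have "e * e ^ size M \<le> cmod (z - x) * cmod (poly (\<Prod>x\<in>#M. [:-x,1:]) z)"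
    using add.prems(2) by (intro mult_mono) auto
  moreover have "poly (\<Prod>x\<in>#add_mset x M. [:-x,1:]) z = (z - x) * poly (\<Prod>x\<in>#M. [:-x,1:]) z" by (simp add: algebra_simps)
  ultimately show ?case by (simp add: norm_mult)
qed


theorem lemma2p2:
  fixes S :: "real set" and m :: nat
  assumes "S \<subseteq> {-1..1/3}"
    and "{-1..1/3} \<subseteq> closure S"
    and "\<forall>a\<in>S. Zset m a \<subseteq> complex_of_real ` Iint a"
  shows "\<forall>a\<in>{-1..1/3}. Zset m a \<subseteq> complex_of_real ` Iint a"
proof (intro ballI subsetI)
  fix a0 z0 assume a0: "a0 \<in> {-1..1/3::real}" and z0: "z0 \<in> Zset m a0"
  have Hz: "H m z0 a0 = 0" using z0 by (simp add: Zset_def)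
  have "a0 \<in> closure S" using a0 assms(2) by blast
  then obtain s where s: "\<And>n. s n \<in> S" and slim: "s \<longlonglongrightarrow> a0"
    by (auto simp: closure_sequential)
  obtain d L where Lc: "continuous_on UNIV L" and Lnz: "\<And>a. a \<le> 1/3 \<Longrightarrow> L a \<noteq> 0"
    and Lco: "\<And>a. coeff (Hp m a) d = L a" and Lhi: "\<And>a k. k > d \<Longrightarrow> coeff (Hp m a) k = 0"
    using Hp_lead[of m] by blast
  define f where "f a = (-2 + 9*a - 2 * sqrt ((1 - 3*a) ^ 3)) / 27" for a :: real
  have If: "Iint a = {..f a}" for a by (simp add: Iint_def f_def)
  have fc: "continuous_on UNIV f" unfolding f_def by (intro continuous_intros) auto
  have key: "\<exists>r. cmod (z0 - of_real r) < e \<and> r \<le> f a0 + e" if e: "e > 0" for e :: real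
  proof -
    have c1: "isCont (\<lambda>b. H m z0 b) a0" using H_cont[of m z0]
      by (simp add: continuous_on_eq_continuous_at)
    have c2: "isCont L a0" using Lc by (simp add: continuous_on_eq_continuous_at)
    have c3: "isCont f a0" using fc by (simp add: continuous_on_eq_continuous_at)
    have t1: "(\<lambda>n. H m z0 (s n)) \<longlonglongrightarrow> 0"
      using isCont_tendsto_compose[OF c1 slim] Hz by simp
    have t2: "(\<lambda>n. L (s n)) \<longlonglongrightarrow> L a0" using isCont_tendsto_compose[OF c2 slim] .
    have t3: "(\<lambda>n. f (s n)) \<longlonglongrightarrow> f a0" using isCont_tendsto_compose[OF c3 slim] .
    have t4: "(\<lambda>n. cmod (L (s n)) * e ^ d - cmod (H m z0 (s n))) \<longlonglongrightarrow> cmod (L a0) * e ^ d - cmod (0::complex)"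
      by (intro tendsto_intros t1 t2)
    have "L a0 \<noteq> 0" using a0 Lnz by simp
    then have "cmod (L a0) * e ^ d - cmod (0::complex) > 0" using e by simp
    then have ev1: "eventually (\<lambda>n. cmod (L (s n)) * e ^ d - cmod (H m z0 (s n)) > 0) sequentially"
      using order_tendstoD(1)[OF t4] by blast
    have ev2: "eventually (\<lambda>n. f (s n) < f a0 + e) sequentially"
      using order_tendstoD(2)[OF t3, of "f a0 + e"] e by simp
    have "eventually (\<lambda>n. cmod (L (s n)) * e ^ d - cmod (H m z0 (s n)) > 0 \<and> f (s n) < f a0 + e) sequentially"
      by (rule eventually_conj[OF ev1 ev2])
    then obtain N where N: "\<forall>n\<ge>N. cmod (L (s n)) * e ^ d - cmod (H m z0 (s n)) > 0 \<and> f (s n) < f a0 + e"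
      unfolding eventually_sequentially by blast
    define n where "n = N"
    have n1: "cmod (L (s n)) * e ^ d - cmod (H m z0 (s n)) > 0" and n2: "f (s n) < f a0 + e"
      using N n_def by auto
    define b where "b = s n"
    have bS: "b \<in> S" using s b_def by simp
    then have b13: "b \<le> 1/3" using assms(1) by auto
    define p where "p = Hp m b"
    have Lb: "L b \<noteq> 0" using Lnz b13 by simp
    have degp: "degree p = d"
    proof (rule antisym)
      show "degree p \<le> d" unfolding p_def by (rule degree_le) (use Lhi in auto)
      show "d \<le> degree p" unfolding p_def by (rule le_degree) (use Lco Lb in auto)
    qed
    have lcp: "lead_coeff p = L b" using degp Lco p_def by simp
    define Q where "Q = (\<Prod>x\<in>#proots p. [:-x, 1:])"
    have "smult (lead_coeff p) Q = p" unfolding Q_def by (rule complex_poly_decompose_multiset)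
    then have "poly p z0 = poly (smult (lead_coeff p) Q) z0" by simp
    then have pQ: "poly p z0 = L b * poly Q z0" using lcp by simp
    have "\<exists>x\<in>#proots p. cmod (z0 - x) < e"
    proof (rule ccontr)
      assume "\<not> ?thesis"
      then have "\<forall>x\<in>#proots p. e \<le> cmod (z0 - x)" by (auto simp: not_less)
      from prod_bound[OF this] e have "e ^ size (proots p) \<le> cmod (poly Q z0)"
        unfolding Q_def by simp
      then have "e ^ d \<le> cmod (poly Q z0)" using degp size_proots_complex[of p] by simp
      then have "cmod (L b) * e ^ d \<le> cmod (L b) * cmod (poly Q z0)"
        by (intro mult_left_mono) auto
      also have "\<dots> = cmod (H m z0 b)" using pQ poly_Hp[of m b z0] p_def by (simp add: norm_mult)
      finally show False using n1 b_def by simp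
    qed
    then obtain x where x: "x \<in># proots p" "cmod (z0 - x) < e" by blast
    have "p \<noteq> 0" using lcp Lb by auto
    then have "poly p x = 0" using x(1) by simp
    then have "x \<in> Zset m b" using poly_Hp[of m b x] p_def by (simp add: Zset_def)
    then obtain r where r: "r \<in> Iint b" "x = of_real r" using assms(3) bS by blast
    have "r \<le> f b" using r(1) If by simp
    moreover have "cmod (z0 - of_real r) < e" using x(2) r(2) by simp
    ultimately show ?thesis using n2 b_def by (intro exI[of _ r]) auto
  qed
  have im: "Im z0 = 0"
  proof (rule ccontr)
    assume "Im z0 \<noteq> 0"
    then obtain r where "cmod (z0 - of_real r) < \<bar>Im z0\<bar>" using key[of "\<bar>Im z0\<bar>"] by auto
    moreover have "\<bar>Im (z0 - of_real r)\<bar> \<le> cmod (z0 - of_real r)" by (rule abs_Im_le_cmod)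
    moreover have "Im (z0 - of_real r) = Im z0" by simp
    ultimately show False by linarith
  qed
  have re: "Re z0 \<le> f a0"
  proof (rule ccontr)
    assume "\<not> ?thesis"
    then have "(Re z0 - f a0) / 3 > 0" by simp
    then obtain r where r: "cmod (z0 - of_real r) < (Re z0 - f a0) / 3" "r \<le> f a0 + (Re z0 - f a0) / 3"
      using key by blast
    moreover have "\<bar>Re (z0 - of_real r)\<bar> \<le> cmod (z0 - of_real r)" by (rule abs_Re_le_cmod)
    moreover have "Re (z0 - of_real r) = Re z0 - r" by simp
    ultimately show False using abs_ge_self[of "Re (z0 - of_real r)"] \<open>\<not> Re z0 \<le> f a0\<close> by argo
  qed
  have "z0 = of_real (Re z0)" using im by (simp add: complex_eq_iff)
  then show "z0 \<in> complex_of_real ` Iint a0" using re If by auto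
qed

end
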